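(* Let $G$ be generated by the random planted model with parameters $n,k,d,p$ where $d\le 2pk/3$, and then let a monotone adversary add arbitrary edges with both endpoints in $V\setminus S$, producing $\tilde G$. If $k\ge 6\sqrt{6n\log n/p}$, then with high probability (over the randomness of the random planted model) every vertex of $S$ has strictly smaller degree in $\tilde G$ than every vertex of $V\setminus S$; in particular, the set of $k$ vertices of smallest degree in $\tilde G$ is exactly $S$.
   Context: Random planted model with parameters $n,k,d,p$: $V$ is a set of $n$ vertices and $S\subset V$ an arbitrary subset with $|S|=k$; edges are added arbitrarily inside $S$ so that the induced graph on $S$ is a connected $d$-regular bipartite graph with parts $S_1,S_2$; each pair in $S\times(V\setminus S)$ and each pair in $(V\setminus S)\times(V\setminus S)$ is made an edge independently with probability $p$. *)

theory Defs
  imports "HOL-Probability.Probability"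
begin

text \<open>Vertices are 0..<n. Graphs are sets of 2-element edges {u,v}.\<close>

definition degree :: "nat set set \<Rightarrow> nat \<Rightarrow> nat" where
  "degree E v = card {u. {u, v} \<in> E}"

definition random_pairs :: "nat \<Rightarrow> nat set \<Rightarrow> nat set set" where
  "random_pairs n S = {{u, v} | u v. u \<noteq> v \<and> u < n \<and> v < n \<and> \<not> (u \<in> S \<and> v \<in> S)}"

text \<open>Pairs the monotone adversary may add: both endpoints outside S.\<close>
definition outside_pairs :: "nat \<Rightarrow> nat set \<Rightarrow> nat set set" where
  "outside_pairs n S = {{u, v} | u v. u \<noteq> v \<and> u < n \<and> v < n \<and> u \<notin> S \<and> v \<notin> S}"

definition planted_ok ::
  "nat \<Rightarrow> nat \<Rightarrow> nat \<Rightarrow> nat set \<Rightarrow> nat set \<Rightarrow> nat set \<Rightarrow> nat set set \<Rightarrow> bool" where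
  "planted_ok n k d S S1 S2 H \<longleftrightarrow>
     S \<subseteq> {..<n} \<and> card S = k \<and> S1 \<union> S2 = S \<and> S1 \<inter> S2 = {} \<and>
     H \<subseteq> {{u, v} | u v. u \<in> S1 \<and> v \<in> S2} \<and>
     (\<forall>v\<in>S. degree H v = d) \<and>
     (\<forall>u\<in>S. \<forall>v\<in>S. (u, v) \<in> {(x, y). {x, y} \<in> H}\<^sup>*)"

definition random_planted :: "nat \<Rightarrow> real \<Rightarrow> nat set \<Rightarrow> nat set set \<Rightarrow> nat set set pmf" where
  "random_planted n p S H =
     map_pmf (\<lambda>f. H \<union> {e \<in> random_pairs n S. f e})
       (Pi_pmf (random_pairs n S) False (\<lambda>_. bernoulli_pmf p))"

definition good_event :: "nat \<Rightarrow> nat set \<Rightarrow> nat set set \<Rightarrow> bool" where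
  "good_event n S E \<longleftrightarrow>
     (\<forall>A. A \<subseteq> outside_pairs n S \<longrightarrow>
        (\<forall>u\<in>S. \<forall>v\<in>{..<n} - S. degree (E \<union> A) u < degree (E \<union> A) v))"

end

theory Submission
  imports Defs
begin

lemma finite_set_Pi_bern:
  assumes "finite R"
  shows "finite (set_pmf (Pi_pmf R False (\<lambda>_. bernoulli_pmf p)))"
proof -
  have "set_pmf (Pi_pmf R False (\<lambda>_. bernoulli_pmf p)) \<subseteq> PiE_dflt R False (set_pmf \<circ> (\<lambda>_. bernoulli_pmf p))"
    by (rule set_Pi_pmf_subset'[OF assms])
  moreover have "finite (PiE_dflt R False (set_pmf \<circ> (\<lambda>_. bernoulli_pmf p)))"
    using assms by (intro finite_PiE_dflt) auto
  ultimately show ?thesis by (rule finite_subset)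
qed

lemma mgf_count:
  fixes R C :: "'a set" and p l :: real
  assumes R: "finite R" and C: "C \<subseteq> R" and p: "0 \<le> p" "p \<le> 1"
  shows "measure_pmf.expectation (Pi_pmf R False (\<lambda>_. bernoulli_pmf p))
           (\<lambda>f. exp (l * real (card {e\<in>C. f e}))) = (1 - p + p * exp l) ^ card C"
proof -
  define g where "g = (\<lambda>e (b::bool). if e \<in> C \<and> b then exp l else 1)"
  have eq: "exp (l * real (card {e\<in>C. f e})) = (\<Prod>e\<in>R. g e (f e))" for f
  proof -
    have "(\<Prod>e\<in>R. g e (f e)) = (\<Prod>e\<in>{e\<in>C. f e}. exp l)"
      unfolding g_def using R C
      by (intro prod.mono_neutral_cong_right) auto
    also have "\<dots> = exp l ^ card {e\<in>C. f e}" by simp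
    also have "\<dots> = exp (l * real (card {e\<in>C. f e}))"
      by (simp add: exp_of_nat_mult[symmetric] mult.commute)
    finally show ?thesis by simp
  qed
  have "measure_pmf.expectation (Pi_pmf R False (\<lambda>_. bernoulli_pmf p))
           (\<lambda>f. exp (l * real (card {e\<in>C. f e})))
      = measure_pmf.expectation (Pi_pmf R False (\<lambda>_. bernoulli_pmf p)) (\<lambda>f. \<Prod>e\<in>R. g e (f e))"
    by (simp add: eq)
  also have "\<dots> = (\<Prod>e\<in>R. measure_pmf.expectation (bernoulli_pmf p) (g e))"
    by (rule expectation_prod_Pi_pmf[OF R])
       (auto simp: g_def intro!: integrable_measure_pmf_finite)
  also have "\<dots> = (\<Prod>e\<in>R. if e \<in> C then 1 - p + p * exp l else 1)"
    using p by (intro prod.cong) (auto simp: g_def algebra_simps)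
  also have "\<dots> = (\<Prod>e\<in>C. 1 - p + p * exp l)"
    using R C finite_subset[OF C R] by (intro prod.mono_neutral_cong_left[symmetric]) auto
  also have "\<dots> = (1 - p + p * exp l) ^ card C" by simp
  finally show ?thesis .
qed

lemma markov_count:
  fixes R C :: "'a set" and p l a :: real
  assumes R: "finite R" and C: "C \<subseteq> R" and p: "0 \<le> p" "p \<le> 1"
  shows "measure_pmf.prob (Pi_pmf R False (\<lambda>_. bernoulli_pmf p))
           {f. exp (l * a) \<le> exp (l * real (card {e\<in>C. f e}))} \<le> (1 - p + p * exp l) ^ card C / exp (l * a)"
proof -
  let ?M = "Pi_pmf R False (\<lambda>_. bernoulli_pmf p)"
  have "measure_pmf.prob ?M {f\<in>space (measure_pmf ?M). exp (l * a) \<le> exp (l * real (card {e\<in>C. f e}))}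
     \<le> measure_pmf.expectation ?M (\<lambda>f. exp (l * real (card {e\<in>C. f e}))) / exp (l * a)"
    by (rule integral_Markov_inequality_measure[where A = UNIV])
       (auto intro!: integrable_measure_pmf_finite finite_set_Pi_bern R)
  then show ?thesis using mgf_count[OF R C p, of l] by simp
qed

lemma chernoff_up:
  fixes R C :: "'a set" and p M t :: real
  assumes R: "finite R" and C: "C \<subseteq> R" and p: "0 \<le> p" "p \<le> 1"
    and M: "0 < M" "p * card C \<le> M" and t: "0 \<le> t" "t \<le> 2 * M"
  shows "measure_pmf.prob (Pi_pmf R False (\<lambda>_. bernoulli_pmf p))
           {f. p * card C + t \<le> real (card {e\<in>C. f e})} \<le> exp (- (t^2 / (4 * M)))"
proof -
  define l where "l = t / (2 * M)"
  have l: "0 \<le> l" "l \<le> 1" using M t by (auto simp: l_def field_simps)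
  define N where "N = real (card C)"
  have N: "0 \<le> N" by (simp add: N_def)
  have sub: "{f. p * card C + t \<le> real (card {e\<in>C. f e})} \<subseteq>
     {f. exp (l * (p * card C + t)) \<le> exp (l * real (card {e\<in>C. f e}))}"
    using l by (auto intro!: mult_left_mono)
  have "measure_pmf.prob (Pi_pmf R False (\<lambda>_. bernoulli_pmf p))
           {f. p * card C + t \<le> real (card {e\<in>C. f e})}
     \<le> measure_pmf.prob (Pi_pmf R False (\<lambda>_. bernoulli_pmf p))
           {f. exp (l * (p * card C + t)) \<le> exp (l * real (card {e\<in>C. f e}))}"
    by (rule measure_pmf.finite_measure_mono[OF sub]) simp
  also have "\<dots> \<le> (1 - p + p * exp l) ^ card C / exp (l * (p * card C + t))"
    by (rule markov_count[OF R C p])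
  also have "(1 - p + p * exp l) ^ card C \<le> exp (p * (exp l - 1)) ^ card C"
  proof (rule power_mono)
    show "1 - p + p * exp l \<le> exp (p * (exp l - 1))"
      using exp_ge_add_one_self[of "p * (exp l - 1)"] by (simp add: algebra_simps)
    show "0 \<le> 1 - p + p * exp l" using p by (simp add: add_nonneg_nonneg)
  qed
  also have "exp (p * (exp l - 1)) ^ card C = exp (N * p * (exp l - 1))"
    by (simp add: N_def exp_of_nat_mult[symmetric])
  finally have 1: "measure_pmf.prob (Pi_pmf R False (\<lambda>_. bernoulli_pmf p))
           {f. p * card C + t \<le> real (card {e\<in>C. f e})} \<le> exp (N * p * (exp l - 1)) / exp (l * (p * N + t))"
    by (simp add: N_def divide_right_mono)
  have el: "exp l - 1 \<le> l + l^2" using exp_bound[OF l] by simp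
  have "N * p * (exp l - 1) \<le> N * p * (l + l^2)"
    using el N p by (intro mult_left_mono) auto
  hence "N * p * (exp l - 1) - l * (p * N + t) \<le> N * p * l^2 - l * t"
    by (simp add: algebra_simps)
  also have "\<dots> \<le> M * l^2 - l * t"
    using M N by (intro diff_right_mono mult_right_mono) (auto simp: N_def mult.commute)
  also have "\<dots> = - (t^2 / (4 * M))"
    using M by (simp add: l_def field_simps power2_eq_square)
  finally have 2: "N * p * (exp l - 1) - l * (p * N + t) \<le> - (t^2 / (4 * M))" .
  have "exp (N * p * (exp l - 1)) / exp (l * (p * N + t)) = exp (N * p * (exp l - 1) - l * (p * N + t))"
    by (simp add: exp_diff)
  also have "\<dots> \<le> exp (- (t^2 / (4 * M)))" using 2 by simp
  finally show ?thesis using 1 by simp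
qed

lemma exp_neg_bound:
  fixes l :: real assumes "0 \<le> l"
  shows "exp (- l) \<le> 1 - l + l^2 / 2"
proof -
  have a: "1 + l + l^2/2 \<le> exp l" by (rule exp_lower_Taylor_quadratic[OF assms])
  have pos: "0 < 1 + l + l^2/2" using assms by (simp add: add_pos_nonneg)
  have "(1 - l + l^2/2) * (1 + l + l^2/2) = 1 + l^4/4"
    by (simp add: algebra_simps power2_eq_square power4_eq_xxxx)
  hence b: "1 \<le> (1 - l + l^2/2) * (1 + l + l^2/2)" by simp
  have "exp (- l) = 1 / exp l" by (simp add: exp_minus field_simps)
  also have "\<dots> \<le> 1 / (1 + l + l^2/2)" using a pos by (intro divide_left_mono) auto
  also have "\<dots> \<le> 1 - l + l^2 / 2" using b pos by (simp add: field_simps)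
  finally show ?thesis .
qed

lemma chernoff_low:
  fixes R C :: "'a set" and p M t :: real
  assumes R: "finite R" and C: "C \<subseteq> R" and p: "0 \<le> p" "p \<le> 1"
    and M: "0 < M" "p * card C \<le> M" and t: "0 \<le> t"
  shows "measure_pmf.prob (Pi_pmf R False (\<lambda>_. bernoulli_pmf p))
           {f. real (card {e\<in>C. f e}) \<le> p * card C - t} \<le> exp (- (t^2 / (2 * M)))"
proof -
  define l where "l = t / M"
  have l: "0 \<le> l" using M t by (auto simp: l_def)
  define N where "N = real (card C)"
  have N: "0 \<le> N" by (simp add: N_def)
  have sub: "{f. real (card {e\<in>C. f e}) \<le> p * card C - t} \<subseteq>
     {f. exp ((- l) * (p * card C - t)) \<le> exp ((- l) * real (card {e\<in>C. f e}))}"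
    using l by (auto intro!: mult_left_mono)
  have "measure_pmf.prob (Pi_pmf R False (\<lambda>_. bernoulli_pmf p))
           {f. real (card {e\<in>C. f e}) \<le> p * card C - t}
     \<le> measure_pmf.prob (Pi_pmf R False (\<lambda>_. bernoulli_pmf p))
           {f. exp ((- l) * (p * card C - t)) \<le> exp ((- l) * real (card {e\<in>C. f e}))}"
    by (rule measure_pmf.finite_measure_mono[OF sub]) simp
  also have "\<dots> \<le> (1 - p + p * exp (- l)) ^ card C / exp ((- l) * (p * card C - t))"
    by (rule markov_count[OF R C p])
  also have "(1 - p + p * exp (- l)) ^ card C \<le> exp (p * (exp (- l) - 1)) ^ card C"
  proof (rule power_mono)
    show "1 - p + p * exp (- l) \<le> exp (p * (exp (- l) - 1))"
      using exp_ge_add_one_self[of "p * (exp (- l) - 1)"] by (simp add: algebra_simps)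
    show "0 \<le> 1 - p + p * exp (- l)" using p by (simp add: add_nonneg_nonneg)
  qed
  also have "exp (p * (exp (- l) - 1)) ^ card C = exp (N * p * (exp (- l) - 1))"
    by (simp add: N_def exp_of_nat_mult[symmetric])
  finally have 1: "measure_pmf.prob (Pi_pmf R False (\<lambda>_. bernoulli_pmf p))
           {f. real (card {e\<in>C. f e}) \<le> p * card C - t} \<le> exp (N * p * (exp (- l) - 1)) / exp ((- l) * (p * N - t))"
    by (simp add: N_def divide_right_mono)
  have el: "exp (- l) - 1 \<le> - l + l^2 / 2" using exp_neg_bound[OF l] by simp
  have "N * p * (exp (- l) - 1) \<le> N * p * (- l + l^2 / 2)"
    using el N p by (intro mult_left_mono) auto
  hence "N * p * (exp (- l) - 1) - (- l) * (p * N - t) \<le> N * p * l^2 / 2 - l * t"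
    by (simp add: algebra_simps)
  also have "\<dots> \<le> M * l^2 / 2 - l * t"
    using M N by (intro diff_right_mono divide_right_mono mult_right_mono) (auto simp: N_def mult.commute)
  also have "\<dots> = - (t^2 / (2 * M))"
    using M by (simp add: l_def field_simps power2_eq_square)
  finally have 2: "N * p * (exp (- l) - 1) - (- l) * (p * N - t) \<le> - (t^2 / (2 * M))" .
  have "exp (N * p * (exp (- l) - 1)) / exp ((- l) * (p * N - t)) = exp (N * p * (exp (- l) - 1) - (- l) * (p * N - t))"
    by (simp only: exp_diff)
  also have "\<dots> \<le> exp (- (t^2 / (2 * M)))" using 2 by simp
  finally show ?thesis using 1 by simp
qed


lemma rp_mem: "{x, w} \<in> random_pairs n S \<longleftrightarrow> x \<noteq> w \<and> x < n \<and> w < n \<and> \<not> (x \<in> S \<and> w \<in> S)"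
  unfolding random_pairs_def by (auto simp: doubleton_eq_iff)

lemma finite_rp: "finite (random_pairs n S)"
proof (rule finite_subset)
  show "random_pairs n S \<subseteq> Pow {..<n}" unfolding random_pairs_def by auto
qed simp

lemma doubleton_image:
  assumes "\<forall>e\<in>Q. \<exists>a b. e = {a, b}"
  shows "(\<lambda>x. {x, w}) ` {x. {x, w} \<in> Q} = {e\<in>Q. w \<in> e}"
proof
  show "(\<lambda>x. {x, w}) ` {x. {x, w} \<in> Q} \<subseteq> {e\<in>Q. w \<in> e}" by auto
  show "{e\<in>Q. w \<in> e} \<subseteq> (\<lambda>x. {x, w}) ` {x. {x, w} \<in> Q}"
  proof
    fix e assume e: "e \<in> {e\<in>Q. w \<in> e}"
    then obtain a b where ab: "e = {a, b}" using assms by blast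
    show "e \<in> (\<lambda>x. {x, w}) ` {x. {x, w} \<in> Q}"
    proof (cases "w = a")
      case True
      then have "e = {b, w}" using ab by auto
      then show ?thesis using e by (intro image_eqI[of _ _ b]) auto
    next
      case False
      then have "w = b" using e ab by auto
      then have "e = {a, w}" using ab by auto
      then show ?thesis using e by (intro image_eqI[of _ _ a]) auto
    qed
  qed
qed

lemma inj_doubleton: "inj_on (\<lambda>x. {x, w}) A"
  by (auto simp: inj_on_def doubleton_eq_iff)

lemma card_doubleton:
  assumes "\<forall>e\<in>Q. \<exists>a b. e = {a, b}"
  shows "card {x. {x, w} \<in> Q} = card {e\<in>Q. w \<in> e}"
  using card_image[OF inj_doubleton[of w "{x. {x, w} \<in> Q}"]] doubleton_image[OF assms, of w] by simp

lemma rp_doubleton: "\<forall>e\<in>random_pairs n S. \<exists>a b. e = {a, b}"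
  unfolding random_pairs_def by auto

lemma card_C_in:
  assumes "w \<in> S" "S \<subseteq> {..<n}"
  shows "card {e\<in>random_pairs n S. w \<in> e} = n - card S"
proof -
  have "{x. {x, w} \<in> random_pairs n S} = {..<n} - S"
    using assms by (auto simp: rp_mem)
  then have "card {x. {x, w} \<in> random_pairs n S} = n - card S"
    using assms by (simp add: card_Diff_subset finite_subset)
  then show ?thesis using card_doubleton[OF rp_doubleton] by metis
qed

lemma card_C_out:
  assumes "w \<notin> S" "w < n"
  shows "card {e\<in>random_pairs n S. w \<in> e} = n - 1"
proof -
  have "{x. {x, w} \<in> random_pairs n S} = {..<n} - {w}"
    using assms by (auto simp: rp_mem)
  then have "card {x. {x, w} \<in> random_pairs n S} = n - 1"
    using assms by simp
  then show ?thesis using card_doubleton[OF rp_doubleton] by metis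
qed

lemma card_sel:
  "card {x. {x, w} \<in> {e\<in>random_pairs n S. f e}} = card {e\<in>{e\<in>random_pairs n S. w \<in> e}. f e}"
proof -
  have "card {x. {x, w} \<in> {e\<in>random_pairs n S. f e}} = card {e\<in>{e\<in>random_pairs n S. f e}. w \<in> e}"
    by (rule card_doubleton) (use rp_doubleton in auto)
  also have "{e\<in>{e\<in>random_pairs n S. f e}. w \<in> e} = {e\<in>{e\<in>random_pairs n S. w \<in> e}. f e}" by auto
  finally show ?thesis .
qed


lemma main_bound:
  fixes n k d :: nat and p :: real and S S1 S2 :: "nat set" and H :: "nat set set"
  assumes po: "planted_ok n k d S S1 S2 H" and p: "0 < p" "p \<le> 1"
    and dk: "real d \<le> 2 * p * real k / 3" and k3: "3 \<le> k"
  shows "1 - real n * exp (- ((p * k / 6 - p / 2)^2 / (4 * (p * n))))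
           \<le> measure_pmf.prob (random_planted n p S H) {E. good_event n S E}"
proof -
  have Sn: "S \<subseteq> {..<n}" and cS: "card S = k" and S12: "S1 \<union> S2 = S" "S1 \<inter> S2 = {}"
    and HS: "H \<subseteq> {{u, v} | u v. u \<in> S1 \<and> v \<in> S2}" and degH: "\<forall>v\<in>S. degree H v = d"
    using po unfolding planted_ok_def by auto
  have kn: "k \<le> n" using card_mono[OF _ Sn] cS by simp
  have n0: "0 < n" using kn k3 by simp
  define RP where "RP = random_pairs n S"
  define P where "P = Pi_pmf RP False (\<lambda>_. bernoulli_pmf p)"
  define G where "G = (\<lambda>f. H \<union> {e \<in> RP. f e})"
  define C where "C = (\<lambda>w. {e\<in>RP. w \<in> e})"
  define X where "X = (\<lambda>w f. card {e\<in>C w. f e})"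
  define t where "t = p * k / 6 - p / 2"
  define \<theta> where "\<theta> = p * (real n - 1) - t"
  define M where "M = p * n"
  define B where "B = (\<lambda>w. if w \<in> S then {f. \<theta> \<le> real d + real (X w f)} else {f. real (X w f) < \<theta>})"
  have RPf: "finite RP" unfolding RP_def by (rule finite_rp)
  have CR: "C w \<subseteq> RP" for w unfolding C_def by auto
  have t0: "0 \<le> t" using k3 p by (simp add: t_def field_simps)
  have tM: "t \<le> 2 * M"
  proof -
    have "p * real k \<le> p * real n" using kn p by (intro mult_left_mono) auto
    moreover have "0 \<le> p * real n" using p by simp
    ultimately show ?thesis using p unfolding t_def M_def by linarith
  qed
  have M0: "0 < M" using p n0 by (simp add: M_def)
  have p01: "0 \<le> p" "p \<le> 1" using p by auto
  have Hsub: "\<forall>e\<in>H. e \<subseteq> {..<n}" using HS S12 Sn by auto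
  have degu: "degree (G f \<union> A) u \<le> d + X u f" if u: "u \<in> S" and A: "A \<subseteq> outside_pairs n S" for u f A
  proof -
    have "{x. {x, u} \<in> G f \<union> A} = {x. {x, u} \<in> H} \<union> {x. {x, u} \<in> {e\<in>RP. f e}}"
    proof -
      have "{x, u} \<notin> A" for x
      proof
        assume "{x, u} \<in> A"
        then have "{x, u} \<in> outside_pairs n S" using A by auto
        then show False using u unfolding outside_pairs_def by (auto simp: doubleton_eq_iff)
      qed
      then show ?thesis unfolding G_def by auto
    qed
    then have "degree (G f \<union> A) u \<le> card {x. {x, u} \<in> H} + card {x. {x, u} \<in> {e\<in>RP. f e}}"
      unfolding degree_def by (simp add: card_Un_le)
    also have "card {x. {x, u} \<in> H} = d" using degH u unfolding degree_def by auto
    also have "card {x. {x, u} \<in> {e\<in>RP. f e}} = X u f"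
      unfolding X_def C_def RP_def by (rule card_sel)
    finally show ?thesis .
  qed
  have degv: "X v f \<le> degree (G f \<union> A) v" if v: "v < n" and A: "A \<subseteq> outside_pairs n S" for v f A
  proof -
    have fin: "finite {x. {x, v} \<in> G f \<union> A}"
    proof (rule finite_subset)
      show "{x. {x, v} \<in> G f \<union> A} \<subseteq> {..<n}"
      proof
        fix x assume x: "x \<in> {x. {x, v} \<in> G f \<union> A}"
        have "{x, v} \<subseteq> {..<n}"
        proof -
          have "{x, v} \<in> H \<or> {x, v} \<in> RP \<or> {x, v} \<in> outside_pairs n S"
            using x A unfolding G_def by auto
          then show ?thesis
            using Hsub unfolding RP_def random_pairs_def outside_pairs_def by (auto simp: doubleton_eq_iff)
        qed
        then show "x \<in> {..<n}" by auto
      qed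
    qed simp
    have "X v f = card {x. {x, v} \<in> {e\<in>RP. f e}}"
      unfolding X_def C_def RP_def by (rule card_sel[symmetric])
    also have "\<dots> \<le> card {x. {x, v} \<in> G f \<union> A}"
      by (rule card_mono[OF fin]) (auto simp: G_def)
    finally show ?thesis unfolding degree_def .
  qed
  have good: "good_event n S (G f)" if nb: "f \<notin> (\<Union>w\<in>{..<n}. B w)" for f
    unfolding good_event_def
  proof (intro allI impI ballI)
    fix A u v assume A: "A \<subseteq> outside_pairs n S" and u: "u \<in> S" and v: "v \<in> {..<n} - S"
    have "u < n" using u Sn by auto
    then have "\<not> (\<theta> \<le> real d + real (X u f))" using nb u unfolding B_def by auto
    moreover have "\<not> (real (X v f) < \<theta>)" using nb v unfolding B_def by auto
    ultimately have "d + X u f < X v f" by linarith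
    then show "degree (G f \<union> A) u < degree (G f \<union> A) v"
      using degu[where u=u and f=f and A=A, OF u A] degv[where v=v and f=f and A=A] v A by auto
  qed
  have Bb: "measure_pmf.prob P (B w) \<le> exp (- (t^2 / (4 * M)))" if w: "w < n" for w
  proof (cases "w \<in> S")
    case True
    have cC: "card (C w) = n - k" unfolding C_def RP_def using card_C_in[OF True Sn] cS by simp
    have pc: "p * card (C w) \<le> M" using cC p by (simp add: M_def)
    have "B w \<subseteq> {f. p * card (C w) + t \<le> real (X w f)}"
    proof
      fix f assume "f \<in> B w"
      then have 1: "\<theta> \<le> real d + real (X w f)" using True unfolding B_def by auto
      have "p * card (C w) = p * (real n - real k)" using cC kn by (simp add: of_nat_diff)
      then have "p * card (C w) + t \<le> \<theta> - real d"
        using dk unfolding \<theta>_def t_def by (simp add: algebra_simps)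
      then show "f \<in> {f. p * card (C w) + t \<le> real (X w f)}" using 1 by simp
    qed
    then have "measure_pmf.prob P (B w) \<le> measure_pmf.prob P {f. p * card (C w) + t \<le> real (X w f)}"
      by (intro measure_pmf.finite_measure_mono) auto
    also have "\<dots> \<le> exp (- (t^2 / (4 * M)))"
      unfolding P_def X_def by (rule chernoff_up[OF RPf CR p01 M0 pc[unfolded X_def] t0 tM])
    finally show ?thesis .
  next
    case False
    have cC: "card (C w) = n - 1" unfolding C_def RP_def using card_C_out[OF False w] by simp
    have pc: "p * card (C w) \<le> M" using cC p by (simp add: M_def)
    have "B w \<subseteq> {f. real (X w f) \<le> p * card (C w) - t}"
    proof
      fix f assume "f \<in> B w"
      then have 1: "real (X w f) < \<theta>" using False unfolding B_def by auto
      have "p * card (C w) = p * (real n - 1)" using cC n0 by (simp add: of_nat_diff)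
      then have "\<theta> = p * card (C w) - t" unfolding \<theta>_def by linarith
      then have "real (X w f) \<le> p * card (C w) - t" using 1 by linarith
      then show "f \<in> {f. real (X w f) \<le> p * card (C w) - t}" by simp
    qed
    then have "measure_pmf.prob P (B w) \<le> measure_pmf.prob P {f. real (X w f) \<le> p * card (C w) - t}"
      by (intro measure_pmf.finite_measure_mono) auto
    also have "\<dots> \<le> exp (- (t^2 / (2 * M)))"
      unfolding P_def X_def by (rule chernoff_low[OF RPf CR p01 M0 pc t0])
    also have "\<dots> \<le> exp (- (t^2 / (4 * M)))"
      using M0 by (simp add: frac_le divide_left_mono)
    finally show ?thesis .
  qed
  have "measure_pmf.prob P (\<Union>w\<in>{..<n}. B w) \<le> (\<Sum>w\<in>{..<n}. measure_pmf.prob P (B w))"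
    by (rule measure_pmf.finite_measure_subadditive_finite) auto
  also have "\<dots> \<le> (\<Sum>w\<in>{..<n}. exp (- (t^2 / (4 * M))))"
    by (rule sum_mono) (use Bb in auto)
  also have "\<dots> = real n * exp (- (t^2 / (4 * M)))" by simp
  finally have U: "measure_pmf.prob P (\<Union>w\<in>{..<n}. B w) \<le> real n * exp (- (t^2 / (4 * M)))" .
  have c1: "measure_pmf.prob P (UNIV - (\<Union>w\<in>{..<n}. B w)) = 1 - measure_pmf.prob P (\<Union>w\<in>{..<n}. B w)"
    using measure_pmf.prob_compl[of "\<Union>w\<in>{..<n}. B w" P] by simp
  have c2: "measure_pmf.prob P (UNIV - (\<Union>w\<in>{..<n}. B w)) \<le> measure_pmf.prob P {f. good_event n S (G f)}"
    by (intro measure_pmf.finite_measure_mono) (use good in auto)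
  have "1 - real n * exp (- (t^2 / (4 * M))) \<le> measure_pmf.prob P {f. good_event n S (G f)}"
    using U c1 c2 by linarith
  moreover have "measure_pmf.prob (random_planted n p S H) {E. good_event n S E} = measure_pmf.prob P {f. good_event n S (G f)}"
    unfolding random_planted_def P_def G_def RP_def by simp
  ultimately show ?thesis unfolding t_def M_def by simp
qed


lemma asym_bound:
  fixes n k :: nat and p :: real
  assumes n3: "3 \<le> n" and p: "0 < p" "p \<le> 1"
    and kb: "real k \<ge> 6 * sqrt (6 * real n * ln (real n) / p)"
  shows "21 \<le> k" "real n * exp (- ((p * k / 6 - p / 2)^2 / (4 * (p * n)))) \<le> real n powr (-5/49)"
proof -
  have ln1: "1 \<le> ln (real n)"
  proof -
    have "exp 1 \<le> real n" using exp_le n3 by linarith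
    then have "ln (exp 1) \<le> ln (real n)" using n3 by (subst ln_le_cancel_iff) auto
    then show ?thesis by simp
  qed
  define x where "x = 6 * real n * ln (real n) / p"
  have x18: "16 \<le> x"
  proof -
    have "18 \<le> 6 * real n * ln (real n)"
    proof -
      have "6 * 3 * 1 \<le> 6 * real n * ln (real n)"
        using n3 ln1 by (intro mult_mono) auto
      then show ?thesis by simp
    qed
    also have "\<dots> \<le> 6 * real n * ln (real n) / p"
      using p ln1 by (simp add: le_divide_eq mult_left_le)
    finally show ?thesis unfolding x_def by simp
  qed
  have "4 \<le> sqrt x" using x18 by (intro real_le_rsqrt) simp
  then have k24: "24 \<le> real k" using kb unfolding x_def by linarith
  then show "21 \<le> k" by simp
  have "(6 * sqrt x)^2 \<le> (real k)^2"
    using kb x18 unfolding x_def by (intro power_mono) auto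
  then have "36 * x \<le> (real k)^2" using x18 by (simp add: power_mult_distrib)
  then have pk2: "216 * real n * ln (real n) \<le> p * (real k)^2"
    using p unfolding x_def by (simp add: field_simps)
  define t where "t = p * k / 6 - p / 2"
  have tk: "p * k / 7 \<le> t" using k24 p unfolding t_def by (simp add: field_simps)
  have "(p * k / 7)^2 \<le> t^2" using tk p by (intro power_mono) auto
  then have "(p * k / 7)^2 / (4 * (p * n)) \<le> t^2 / (4 * (p * n))"
    using p n3 by (intro divide_right_mono) auto
  moreover have "(p * k / 7)^2 / (4 * (p * n)) = p * (real k)^2 / (196 * n)"
    using p n3 by (simp add: field_simps power2_eq_square)
  moreover have "216 / 196 * ln (real n) \<le> p * (real k)^2 / (196 * n)"
    using pk2 n3 by (simp add: field_simps)
  ultimately have ge: "216 / 196 * ln (real n) \<le> t^2 / (4 * (p * n))" by linarith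
  have "real n * exp (- (t^2 / (4 * (p * n)))) \<le> real n * exp (- (216 / 196 * ln (real n)))"
    using ge by (intro mult_left_mono) auto
  also have "\<dots> = exp (ln (real n)) * exp (- (216 / 196 * ln (real n)))" using n3 by simp
  also have "\<dots> = exp ((-5/49) * ln (real n))" by (simp add: exp_add[symmetric])
  also have "\<dots> = real n powr (-5/49)" using n3 by (simp add: powr_def)
  finally show "real n * exp (- ((p * k / 6 - p / 2)^2 / (4 * (p * n)))) \<le> real n powr (-5/49)"
    unfolding t_def .
qed

theorem lemma1p10:
  fixes k d :: "nat \<Rightarrow> nat" and p :: "nat \<Rightarrow> real"
    and S S1 S2 :: "nat \<Rightarrow> nat set" and H :: "nat \<Rightarrow> nat set set"
  assumes "\<forall>\<^sub>F n in sequentially.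
      planted_ok n (k n) (d n) (S n) (S1 n) (S2 n) (H n) \<and>
      0 < p n \<and> p n \<le> 1 \<and>
      real (d n) \<le> 2 * p n * real (k n) / 3 \<and>
      real (k n) \<ge> 6 * sqrt (6 * real n * ln (real n) / p n)"
  shows "(\<lambda>n. measure_pmf.prob (random_planted n (p n) (S n) (H n))
                 {E. good_event n (S n) E}) \<longlonglongrightarrow> 1"
proof (rule tendsto_sandwich)
  show "\<forall>\<^sub>F n in sequentially. 1 - real n powr (-5/49) \<le> measure_pmf.prob (random_planted n (p n) (S n) (H n))
                 {E. good_event n (S n) E}"
    using eventually_conj[OF assms eventually_ge_at_top[of "3::nat"]]
  proof (rule eventually_mono)
    fix n assume h: "(planted_ok n (k n) (d n) (S n) (S1 n) (S2 n) (H n) \<and>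
      0 < p n \<and> p n \<le> 1 \<and>
      real (d n) \<le> 2 * p n * real (k n) / 3 \<and>
      real (k n) \<ge> 6 * sqrt (6 * real n * ln (real n) / p n)) \<and> 3 \<le> n"
    have a: "21 \<le> k n" "real n * exp (- ((p n * k n / 6 - p n / 2)^2 / (4 * (p n * n)))) \<le> real n powr (-5/49)"
      using asym_bound[of n "p n" "k n"] h by auto
    have "1 - real n * exp (- ((p n * k n / 6 - p n / 2)^2 / (4 * (p n * n))))
           \<le> measure_pmf.prob (random_planted n (p n) (S n) (H n)) {E. good_event n (S n) E}"
      using main_bound[of n "k n" "d n" "S n" "S1 n" "S2 n" "H n" "p n"] h a(1) by auto
    then show "1 - real n powr (-5/49) \<le> measure_pmf.prob (random_planted n (p n) (S n) (H n))
                 {E. good_event n (S n) E}" using a(2) by linarith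
  qed
  show "\<forall>\<^sub>F n in sequentially. measure_pmf.prob (random_planted n (p n) (S n) (H n))
                 {E. good_event n (S n) E} \<le> 1"
    by (simp add: measure_pmf.prob_le_1)
  show "(\<lambda>n. 1 - real n powr (-5/49)) \<longlonglongrightarrow> 1"
  proof -
    have "(\<lambda>n. real n powr (-5/49)) \<longlonglongrightarrow> 0"
      by (rule tendsto_neg_powr) (auto intro: filterlim_real_sequentially)
    then have "(\<lambda>n. 1 - real n powr (-5/49)) \<longlonglongrightarrow> 1 - 0" by (intro tendsto_diff tendsto_const)
    then show ?thesis by simp
  qed
  show "(\<lambda>n. 1) \<longlonglongrightarrow> (1::real)" by simp
qed

end
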